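(* Let $f:\mathbb{R}^n\to\mathbb{R}$ be twice continuously differentiable, $m_{2s}$-restricted strongly convex and $M_{2s}$-restricted strongly smooth. Let $\gamma\le m_{2s}$ and $0<\eta\le 1/(4M_{2s})$. Let $\mathbf x^k\in\mathbb{R}^n$ be $s$-sparse, let $T_k\in\mathcal{T}(\mathbf x^k;\eta)$, and let $\mathbf d^k_N$ be the Newton direction at $(\mathbf x^k,T_k)$. Then $$\langle\nabla_{T_k}f(\mathbf x^k),(\mathbf d^k_N)_{T_k}\rangle\le-\gamma\|\mathbf d^k_N\|^2+\frac{1}{4\eta}\|\mathbf x^k_{T_k^c}\|^2.$$
   Context: Notation: $\|\mathbf x\|_0$ = number of nonzero entries; $s$-sparse means $\|\mathbf x\|_0\le s$; $\mathrm{supp}(\mathbf x)$ = indices of nonzero entries; for $T\subseteq\{1,\dots,n\}$, $T^c$ its complement, $\mathbf x_T$ the subvector indexed by $T$, $\nabla_T f(\mathbf x)=(\nabla f(\mathbf x))_T$, $\nabla^2_{T,J}f(\mathbf x)$ the submatrix of the Hessian with rows in $T$ and columns in $J$, $\nabla^2_T f=\nabla^2_{T,T}f$. $\mathcal{P}_s(\mathbf x)=\mathrm{argmin}_{\mathbf z}\{\|\mathbf x-\mathbf z\|:\|\mathbf z\|_0\le s\}$ (a set). $\mathcal{T}(\mathbf x;\eta)=\{T: |T|=s,\ T\supseteq\mathrm{supp}(\mathbf z)\text{ for some }\mathbf z\in\mathcal{P}_s(\mathbf x-\eta\nabla f(\mathbf x))\}$. For $s$-sparse $\mathbf x$ let $M_{2s}(\mathbf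 x)=\sup\{\langle\mathbf y,\nabla^2 f(\mathbf x)\mathbf y\rangle: |\mathrm{supp}(\mathbf x)\cup\mathrm{supp}(\mathbf y)|\le 2s,\ \|\mathbf y\|=1\}$ and $m_{2s}(\mathbf x)$ the corresponding infimum. $f$ is $M_{2s}$-restricted strongly smooth if there is a constant $M_{2s}>0$ with $M_{2s}(\mathbf x)\le M_{2s}$ for all $s$-sparse $\mathbf x$; $f$ is $m_{2s}$-restricted strongly convex if there is a constant $m_{2s}>0$ with $m_{2s}(\mathbf x)\ge m_{2s}$ for all $s$-sparse $\mathbf x$. The Newton direction $\mathbf d_N^k$ at $(\mathbf x^k,T_k)$ is defined by $\nabla^2_{T_k}f(\mathbf x^k)(\mathbf d^k_N)_{T_k}=\nabla^2_{T_k,T_k^c}f(\mathbf x^k)\mathbf x^k_{T_k^c}-\nabla_{T_k}f(\mathbf x^k)$ and $(\mathbf d^k_N)_{T_k^c}=-\mathbf x^k_{T_k^c}$. *)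

theory Defs
  imports "HOL-Analysis.Analysis"
begin

text \<open>Vectors in R^n are modelled as real^'n. The gradient g and Hessian H of f
are given explicitly and tied to f by the C^2 assumption below.\<close>

definition twice_cont_diff ::
  "(real^'n \<Rightarrow> real) \<Rightarrow> (real^'n \<Rightarrow> real^'n) \<Rightarrow> (real^'n \<Rightarrow> real^'n^'n) \<Rightarrow> bool" where
  "twice_cont_diff f g H \<longleftrightarrow>
     (\<forall>x. (f has_derivative (\<lambda>h. g x \<bullet> h)) (at x)) \<and>
     (\<forall>x. (g has_derivative (\<lambda>h. H x *v h)) (at x)) \<and>
     continuous_on UNIV H"

definition supp :: "real^'n \<Rightarrow> 'n set" where
  "supp x = {i. x $ i \<noteq> 0}"

definition l0 :: "real^'n \<Rightarrow> nat" where
  "l0 x = card (supp x)"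

definition sparse :: "nat \<Rightarrow> real^'n \<Rightarrow> bool" where
  "sparse s x \<longleftrightarrow> l0 x \<le> s"

text \<open>M_{2s}-restricted strong smoothness: M_{2s}(x) <= M for all s-sparse x,
 where M_{2s}(x) is the sup of the quadratic form over the admissible unit y
 (written out as an upper bound on every element of the set).\<close>
definition restricted_strongly_smooth ::
  "(real^'n \<Rightarrow> real^'n^'n) \<Rightarrow> nat \<Rightarrow> real \<Rightarrow> bool" where
  "restricted_strongly_smooth H s M \<longleftrightarrow> M > 0 \<and>
     (\<forall>x y. sparse s x \<longrightarrow> card (supp x \<union> supp y) \<le> 2 * s \<longrightarrow> norm y = 1 \<longrightarrow>
        y \<bullet> (H x *v y) \<le> M)"

definition restricted_strongly_convex ::
  "(real^'n \<Rightarrow> real^'n^'n) \<Rightarrow> nat \<Rightarrow> real \<Rightarrow> bool" where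
  "restricted_strongly_convex H s m \<longleftrightarrow> m > 0 \<and>
     (\<forall>x y. sparse s x \<longrightarrow> card (supp x \<union> supp y) \<le> 2 * s \<longrightarrow> norm y = 1 \<longrightarrow>
        y \<bullet> (H x *v y) \<ge> m)"

definition proj_sparse :: "nat \<Rightarrow> real^'n \<Rightarrow> (real^'n) set" where
  "proj_sparse s x = {z. sparse s z \<and> (\<forall>w. sparse s w \<longrightarrow> norm (x - z) \<le> norm (x - w))}"

definition Tset :: "nat \<Rightarrow> (real^'n \<Rightarrow> real^'n) \<Rightarrow> real^'n \<Rightarrow> real \<Rightarrow> 'n set set" where
  "Tset s g x \<eta> = {T. card T = s \<and>
      (\<exists>z \<in> proj_sparse s (x - \<eta> *\<^sub>R g x). supp z \<subseteq> T)}"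

definition newton_dir ::
  "(real^'n \<Rightarrow> real^'n) \<Rightarrow> (real^'n \<Rightarrow> real^'n^'n) \<Rightarrow> real^'n \<Rightarrow> 'n set \<Rightarrow> real^'n \<Rightarrow> bool" where
  "newton_dir g H x T d \<longleftrightarrow>
     (\<forall>i\<in>T. (\<Sum>j\<in>T. H x $ i $ j * d $ j) = (\<Sum>j\<in>- T. H x $ i $ j * x $ j) - g x $ i) \<and>
     (\<forall>i\<in>- T. d $ i = - x $ i)"

end

theory Submission
  imports Defs
begin

lemma deriv_line_f:
  assumes "\<forall>y. (f has_derivative (\<lambda>h. g y \<bullet> h)) (at y)"
  shows "DERIV (\<lambda>t. f (p + t *\<^sub>R q)) t :> g (p + t *\<^sub>R q) \<bullet> q"
proof -
  have l: "((\<lambda>t::real. p + t *\<^sub>R q) has_derivative (\<lambda>h. h *\<^sub>R q)) (at t)"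
    by (auto intro!: derivative_eq_intros)
  have "((\<lambda>t. f (p + t *\<^sub>R q)) has_derivative (\<lambda>h. g (p + t *\<^sub>R q) \<bullet> (h *\<^sub>R q))) (at t)"
    using has_derivative_compose[OF l assms[rule_format, of "p + t *\<^sub>R q"]] by simp
  moreover have "(\<lambda>h. h * c) = (*) c" for c :: real by (rule ext) simp
  ultimately show ?thesis unfolding has_field_derivative_def
    by simp
qed

lemma deriv_line_g:
  fixes H :: "real^'n \<Rightarrow> real^'n^'n"
  assumes "\<forall>y. (g has_derivative (\<lambda>h. H y *v h)) (at y)"
  shows "DERIV (\<lambda>t. g (p + t *\<^sub>R q) \<bullet> b) t :> (H (p + t *\<^sub>R q) *v q) \<bullet> b"
proof -
  have l: "((\<lambda>t::real. p + t *\<^sub>R q) has_derivative (\<lambda>h. h *\<^sub>R q)) (at t)"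
    by (auto intro!: derivative_eq_intros)
  have "((\<lambda>t. g (p + t *\<^sub>R q)) has_derivative (\<lambda>h. H (p + t *\<^sub>R q) *v (h *\<^sub>R q))) (at t)"
    using has_derivative_compose[OF l assms[rule_format, of "p + t *\<^sub>R q"]] by simp
  then have "((\<lambda>t. g (p + t *\<^sub>R q) \<bullet> b) has_derivative (\<lambda>h. (H (p + t *\<^sub>R q) *v (h *\<^sub>R q)) \<bullet> b)) (at t)"
    by (auto intro!: derivative_eq_intros)
  moreover have "(\<lambda>h. h * c) = (*) c" for c :: real by (rule ext) simp
  ultimately show ?thesis unfolding has_field_derivative_def
    by (simp add: matrix_vector_mult_scaleR)
qed

lemma delta_repr:
  fixes H :: "real^'n \<Rightarrow> real^'n^'n"
  assumes tc: "twice_cont_diff f g H" and s: "s > 0"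
  shows "\<exists>z. norm (z - y) \<le> s * (norm a + norm b) \<and>
     f (y + s *\<^sub>R a + s *\<^sub>R b) - f (y + s *\<^sub>R a) - f (y + s *\<^sub>R b) + f y = s^2 * ((H z *v a) \<bullet> b)"
proof -
  have df: "\<forall>y. (f has_derivative (\<lambda>h. g y \<bullet> h)) (at y)" and dg: "\<forall>y. (g has_derivative (\<lambda>h. H y *v h)) (at y)"
    using tc unfolding twice_cont_diff_def by auto
  define \<psi> where "\<psi> t = f ((y + s *\<^sub>R a) + t *\<^sub>R b) - f (y + t *\<^sub>R b)" for t
  have "DERIV \<psi> t :> g ((y + s *\<^sub>R a) + t *\<^sub>R b) \<bullet> b - g (y + t *\<^sub>R b) \<bullet> b" for t
    unfolding \<psi>_def by (intro derivative_intros deriv_line_f[OF df])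
  from MVT2[OF s this] obtain \<xi> where \<xi>: "0 < \<xi>" "\<xi> < s"
    "\<psi> s - \<psi> 0 = (s - 0) * (g ((y + s *\<^sub>R a) + \<xi> *\<^sub>R b) \<bullet> b - g (y + \<xi> *\<^sub>R b) \<bullet> b)" by blast
  have "DERIV (\<lambda>r. g ((y + \<xi> *\<^sub>R b) + r *\<^sub>R a) \<bullet> b) r :> (H ((y + \<xi> *\<^sub>R b) + r *\<^sub>R a) *v a) \<bullet> b" for r
    by (rule deriv_line_g[OF dg])
  from MVT2[OF s this] obtain \<rho> where \<rho>: "0 < \<rho>" "\<rho> < s"
    "g ((y + \<xi> *\<^sub>R b) + s *\<^sub>R a) \<bullet> b - g ((y + \<xi> *\<^sub>R b) + 0 *\<^sub>R a) \<bullet> b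
      = (s - 0) * ((H ((y + \<xi> *\<^sub>R b) + \<rho> *\<^sub>R a) *v a) \<bullet> b)" by blast
  define z where "z = (y + \<xi> *\<^sub>R b) + \<rho> *\<^sub>R a"
  have "norm (z - y) \<le> norm (\<xi> *\<^sub>R b) + norm (\<rho> *\<^sub>R a)"
    unfolding z_def by (metis add_diff_cancel_left' add.commute norm_triangle_ineq add.assoc)
  also have "\<dots> \<le> s * norm b + s * norm a"
    using \<xi> \<rho> by (intro add_mono) (auto intro!: mult_right_mono)
  finally have nz: "norm (z - y) \<le> s * (norm a + norm b)" by (simp add: algebra_simps)
  have "(y + s *\<^sub>R a) + \<xi> *\<^sub>R b = (y + \<xi> *\<^sub>R b) + s *\<^sub>R a" by (simp add: algebra_simps)
  then have "f (y + s *\<^sub>R a + s *\<^sub>R b) - f (y + s *\<^sub>R a) - f (y + s *\<^sub>R b) + f y = s^2 * ((H z *v a) \<bullet> b)"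
    using \<xi>(3) \<rho>(3) unfolding \<psi>_def z_def by (simp add: power2_eq_square algebra_simps)
  with nz show ?thesis by blast
qed

lemma hess_sym:
  fixes H :: "real^'n \<Rightarrow> real^'n^'n"
  assumes tc: "twice_cont_diff f g H"
  shows "(H y *v a) \<bullet> b = (H y *v b) \<bullet> a"
proof -
  have cH: "continuous_on UNIV H" using tc unfolding twice_cont_diff_def by auto
  have cF: "continuous_on UNIV (\<lambda>w. (H w *v p) \<bullet> q)" for p q
    unfolding matrix_vector_mult_def inner_vec_def
    by (intro continuous_intros continuous_on_component cH)
  show ?thesis
  proof (rule ccontr)
    assume ne: "(H y *v a) \<bullet> b \<noteq> (H y *v b) \<bullet> a"
    define e where "e = \<bar>(H y *v a) \<bullet> b - (H y *v b) \<bullet> a\<bar> / 2"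
    have e: "e > 0" using ne unfolding e_def by auto
    obtain d1 where d1: "d1 > 0" "\<And>w. dist w y < d1 \<Longrightarrow> dist ((H w *v a) \<bullet> b) ((H y *v a) \<bullet> b) < e"
      using cF[of a b] e unfolding continuous_on_iff by (metis UNIV_I)
    obtain d2 where d2: "d2 > 0" "\<And>w. dist w y < d2 \<Longrightarrow> dist ((H w *v b) \<bullet> a) ((H y *v b) \<bullet> a) < e"
      using cF[of b a] e unfolding continuous_on_iff by (metis UNIV_I)
    define s where "s = min d1 d2 / (2 * (norm a + norm b + 1))"
    have npos: "norm a + norm b + 1 > 0" by (simp add: add_nonneg_pos)
    have s: "s > 0" unfolding s_def using d1 d2 npos by auto
    have sb: "s * (norm a + norm b) < min d1 d2"
    proof -
      have "s * (norm a + norm b) \<le> s * (norm a + norm b + 1)" using s by simp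
      also have "\<dots> = min d1 d2 / 2" unfolding s_def using npos by (simp add: field_simps)
      also have "\<dots> < min d1 d2" using d1(1) d2(1) by linarith
      finally show ?thesis .
    qed
    obtain z1 where z1: "norm (z1 - y) \<le> s * (norm a + norm b)"
      "f (y + s *\<^sub>R a + s *\<^sub>R b) - f (y + s *\<^sub>R a) - f (y + s *\<^sub>R b) + f y = s^2 * ((H z1 *v a) \<bullet> b)"
      using delta_repr[OF tc s] by blast
    obtain z2 where z2: "norm (z2 - y) \<le> s * (norm b + norm a)"
      "f (y + s *\<^sub>R b + s *\<^sub>R a) - f (y + s *\<^sub>R b) - f (y + s *\<^sub>R a) + f y = s^2 * ((H z2 *v b) \<bullet> a)"
      using delta_repr[OF tc s, of y b a] by blast
    have yy: "y + s *\<^sub>R b + s *\<^sub>R a = y + s *\<^sub>R a + s *\<^sub>R b" by (simp add: algebra_simps)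
    have "s^2 * ((H z1 *v a) \<bullet> b) = s^2 * ((H z2 *v b) \<bullet> a)" using z1(2) z2(2)[unfolded yy] by linarith
    then have eq: "(H z1 *v a) \<bullet> b = (H z2 *v b) \<bullet> a" using s by simp
    have "dist z1 y < d1" using z1(1) sb by (simp add: dist_norm)
    then have A: "\<bar>(H z1 *v a) \<bullet> b - (H y *v a) \<bullet> b\<bar> < e" using d1(2) by (simp add: dist_real_def)
    have "dist z2 y < d2" using z2(1) sb by (simp add: dist_norm add.commute)
    then have B: "\<bar>(H z2 *v b) \<bullet> a - (H y *v b) \<bullet> a\<bar> < e" using d2(2) by (simp add: dist_real_def)
    from A B eq show False unfolding e_def by (auto simp: abs_less_iff abs_if split: if_splits)
  qed
qed

lemma supp_scale: "c \<noteq> 0 \<Longrightarrow> supp (c *\<^sub>R y) = supp y"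
  unfolding supp_def by auto

lemma quad_low:
  assumes "restricted_strongly_convex H s m" "sparse s x" "card (supp x \<union> supp y) \<le> 2 * s"
  shows "m * (norm y)^2 \<le> y \<bullet> (H x *v y)"
proof (cases "y = 0")
  case True then show ?thesis by simp
next
  case False
  define y' where "y' = (1 / norm y) *\<^sub>R y"
  have ny: "norm y > 0" using False by simp
  have "supp y' = supp y" unfolding y'_def using ny by (intro supp_scale) simp
  moreover have "norm y' = 1" unfolding y'_def using ny by simp
  ultimately have "m \<le> y' \<bullet> (H x *v y')" using assms unfolding restricted_strongly_convex_def by auto
  also have "\<dots> = (y \<bullet> (H x *v y)) / (norm y)^2"
    unfolding y'_def by (simp add: matrix_vector_mult_scaleR power2_eq_square)
  finally show ?thesis using ny by (simp add: field_simps)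
qed

lemma quad_up:
  assumes "restricted_strongly_smooth H s M" "sparse s x" "card (supp x \<union> supp y) \<le> 2 * s"
  shows "y \<bullet> (H x *v y) \<le> M * (norm y)^2"
proof (cases "y = 0")
  case True then show ?thesis by simp
next
  case False
  define y' where "y' = (1 / norm y) *\<^sub>R y"
  have ny: "norm y > 0" using False by simp
  have "supp y' = supp y" unfolding y'_def using ny by (intro supp_scale) simp
  moreover have "norm y' = 1" unfolding y'_def using ny by simp
  ultimately have "y' \<bullet> (H x *v y') \<le> M" using assms unfolding restricted_strongly_smooth_def by auto
  moreover have "y' \<bullet> (H x *v y') = (y \<bullet> (H x *v y)) / (norm y)^2"
    unfolding y'_def by (simp add: matrix_vector_mult_scaleR power2_eq_square)
  ultimately show ?thesis using ny by (simp add: field_simps)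
qed

theorem lemma5:
  fixes f :: "real^'n \<Rightarrow> real" and g :: "real^'n \<Rightarrow> real^'n" and H :: "real^'n \<Rightarrow> real^'n^'n"
    and s :: nat and m M \<gamma> \<eta> :: real and x d :: "real^'n" and T :: "'n set"
  assumes "twice_cont_diff f g H"
    and "restricted_strongly_convex H s m"
    and "restricted_strongly_smooth H s M"
    and "\<gamma> \<le> m"
    and "0 < \<eta>" and "\<eta> \<le> 1 / (4 * M)"
    and "sparse s x"
    and "T \<in> Tset s g x \<eta>"
    and "newton_dir g H x T d"
  shows "(\<Sum>i\<in>T. g x $ i * d $ i)
           \<le> - \<gamma> * (norm d)\<^sup>2 + 1 / (4 * \<eta>) * (\<Sum>i\<in>- T. (x $ i)\<^sup>2)"
proof -
  define A where "A = H x"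
  define v where "v = (\<chi> i. if i \<in> T then d $ i else 0)"
  define u where "u = (\<chi> i. if i \<in> T then 0 else x $ i)"
  define w where "w = v - (1/2) *\<^sub>R u"
  have nd: "\<forall>i\<in>T. (\<Sum>j\<in>T. A $ i $ j * d $ j) = (\<Sum>j\<in>- T. A $ i $ j * x $ j) - g x $ i"
    "\<forall>i\<in>- T. d $ i = - x $ i" using assms(9) unfolding newton_dir_def A_def by auto
  have cT: "card T = s" using assms(8) unfolding Tset_def by auto
  have sx: "card (supp x) \<le> s" using assms(7) unfolding sparse_def l0_def .
  have d_eq: "d = v - u" using nd(2) unfolding v_def u_def by (auto simp: vec_eq_iff)
  have Au: "(A *v u) $ i = (\<Sum>j\<in>- T. A $ i $ j * x $ j)" for i
  proof -
    have "(A *v u) $ i = (\<Sum>j\<in>UNIV. if j \<in> T then 0 else A $ i $ j * x $ j)"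
      unfolding matrix_vector_mult_def u_def by (auto intro!: sum.cong)
    also have "\<dots> = (\<Sum>j\<in>- T. A $ i $ j * x $ j)"
      by (simp add: sum.If_cases Compl_eq_Diff_UNIV)
    finally show ?thesis .
  qed
  have Av: "(A *v v) $ i = (\<Sum>j\<in>T. A $ i $ j * d $ j)" for i
  proof -
    have "(A *v v) $ i = (\<Sum>j\<in>UNIV. if j \<in> T then A $ i $ j * d $ j else 0)"
      unfolding matrix_vector_mult_def v_def by (auto intro!: sum.cong)
    also have "\<dots> = (\<Sum>j\<in>T. A $ i $ j * d $ j)"
      by (simp add: sum.If_cases)
    finally show ?thesis .
  qed
  have vdot: "v \<bullet> z = (\<Sum>i\<in>T. d $ i * z $ i)" for z
  proof -
    have "v \<bullet> z = (\<Sum>i\<in>UNIV. if i \<in> T then d $ i * z $ i else 0)"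
      unfolding inner_vec_def v_def by (auto intro!: sum.cong)
    also have "\<dots> = (\<Sum>i\<in>T. d $ i * z $ i)" by (simp add: sum.If_cases)
    finally show ?thesis .
  qed
  have "(\<Sum>i\<in>T. g x $ i * d $ i) = (\<Sum>i\<in>T. d $ i * ((A *v u) $ i - (A *v v) $ i))"
    using nd(1) by (auto simp: Au Av intro!: sum.cong)
  also have "\<dots> = v \<bullet> (A *v u) - v \<bullet> (A *v v)"
    by (simp add: vdot right_diff_distrib sum_subtractf)
  finally have lhs: "(\<Sum>i\<in>T. g x $ i * d $ i) = v \<bullet> (A *v u) - v \<bullet> (A *v v)" .
  have sym: "v \<bullet> (A *v u) = u \<bullet> (A *v v)"
    using hess_sym[OF assms(1), of x u v] unfolding A_def by (simp add: inner_commute)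
  have uv0: "v \<bullet> u = 0"
    unfolding inner_vec_def v_def u_def by (intro sum.neutral) auto
  have nu: "(norm u)^2 = (\<Sum>i\<in>- T. (x $ i)\<^sup>2)"
  proof -
    have "(norm u)^2 = (\<Sum>i\<in>UNIV. if i \<in> T then 0 else (x $ i)\<^sup>2)"
      unfolding power2_norm_eq_inner inner_vec_def u_def by (auto simp: power2_eq_square intro!: sum.cong)
    also have "\<dots> = (\<Sum>i\<in>- T. (x $ i)\<^sup>2)" by (simp add: sum.If_cases Compl_eq_Diff_UNIV)
    finally show ?thesis .
  qed
  have nd2: "(norm d)^2 = (norm v)^2 + (norm u)^2"
    unfolding d_eq power2_norm_eq_inner using uv0 by (simp add: inner_diff_left inner_diff_right inner_commute)
  have nw2: "(norm w)^2 = (norm v)^2 + (norm u)^2 / 4"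
    unfolding w_def power2_norm_eq_inner using uv0
    by (simp add: inner_diff_left inner_diff_right inner_commute)
  have qw: "w \<bullet> (A *v w) = v \<bullet> (A *v v) - v \<bullet> (A *v u) + u \<bullet> (A *v u) / 4"
    unfolding w_def using sym
    by (simp add: inner_diff_left inner_diff_right matrix_vector_mult_diff_distrib matrix_vector_mult_scaleR) (simp add: field_simps)
  have fin: "finite (S :: 'n set)" for S by simp
  have cTx: "card (T \<union> supp x) \<le> 2 * s"
    using card_Un_le[of T "supp x"] cT sx by linarith
  have suppw: "supp x \<union> supp w \<subseteq> T \<union> supp x"
    unfolding supp_def w_def v_def u_def by auto
  have suppu: "supp x \<union> supp u \<subseteq> T \<union> supp x"
    unfolding supp_def u_def by auto
  have cw: "card (supp x \<union> supp w) \<le> 2 * s"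
    using card_mono[OF fin suppw] cTx by linarith
  have cu: "card (supp x \<union> supp u) \<le> 2 * s"
    using card_mono[OF fin suppu] cTx by linarith
  have lw: "m * (norm w)^2 \<le> w \<bullet> (A *v w)"
    using quad_low[OF assms(2,7) cw] unfolding A_def .
  have lu: "m * (norm u)^2 \<le> u \<bullet> (A *v u)"
    using quad_low[OF assms(2,7) cu] unfolding A_def .
  have uu: "u \<bullet> (A *v u) \<le> M * (norm u)^2"
    using quad_up[OF assms(3,7) cu] unfolding A_def .
  have Mpos: "M > 0" using assms(3) unfolding restricted_strongly_smooth_def by auto
  have Meta: "M \<le> 1 / (4 * \<eta>)"
    using assms(5,6) Mpos by (simp add: field_simps)
  have "(\<Sum>i\<in>T. g x $ i * d $ i) \<le> - m * (norm v)^2 - m * (norm u)^2 + M * (norm u)^2"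
  proof -
    have "m * (norm w)^2 = m*(norm v)^2 + m*(norm u)^2/4" by (simp add: nw2 algebra_simps)
    then show ?thesis using lhs qw lw lu uu by linarith
  qed
  also have "\<dots> \<le> - \<gamma> * (norm d)\<^sup>2 + 1 / (4 * \<eta>) * (norm u)^2"
  proof -
    have "- m * (norm d)^2 \<le> - \<gamma> * (norm d)\<^sup>2" using assms(4) by (simp add: mult_right_mono)
    moreover have "M * (norm u)^2 \<le> 1 / (4 * \<eta>) * (norm u)^2" using Meta by (rule mult_right_mono) simp
    moreover have "- m * (norm d)^2 = - m * (norm v)^2 - m * (norm u)^2" by (simp add: nd2 algebra_simps)
    ultimately show ?thesis by linarith
  qed
  finally show ?thesis unfolding nu .
qed

end
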